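(* Let $k\ge1$ and let $F$ be a partially colored forest. If Alice can win the $k$-Modified Coloring Game on every trunk in $\mathcal{R}(F)$, then she can win the $k$-Modified Coloring Game on $\mathcal{R}(F)$.
   Context: A partial coloring of a graph assigns to some vertices colors from a fixed set $C$ of $k$ colors so that adjacent colored vertices receive different colors; a color is legal for an uncolored vertex $v$ if no neighbor of $v$ has that color. The $k$-Modified Coloring Game ($k$-MCG) on a partially colored graph: Bob and Alice alternate turns, Bob first, each turn coloring an uncolored vertex with a legal color from $C$, except that Bob may choose to pass on any of his turns. Bob wins if at some point an uncolored vertex has no legal color; Alice wins if every vertex becomes colored. For a partially colored forest $F$, a trunk of $F$ is a maximal connected subgraph $R$ of $F$ such that every colored vertex of $R$ is a leaf of $R$. $\mathcal{R}(F)$ denotes the partially colored forest that is the disjoint union of all trunks of $F$ (a colored vertex lying in several trunks appears as a separate colored copy in each of them). *)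

theory Defs
  imports Main
begin

text \<open>Graphs: a vertex set V and an edge relation E (symmetric, irreflexive, on V).
  Partial colourings: c :: 'a => nat option, colours are 0..<k; None = uncoloured.\<close>

definition is_graph :: "'a set \<Rightarrow> ('a \<Rightarrow> 'a \<Rightarrow> bool) \<Rightarrow> bool" where
  "is_graph V E \<longleftrightarrow> finite V \<and> (\<forall>u v. E u v \<longrightarrow> u \<in> V \<and> v \<in> V \<and> E v u \<and> u \<noteq> v)"

definition is_cycle :: "('a \<Rightarrow> 'a \<Rightarrow> bool) \<Rightarrow> 'a list \<Rightarrow> bool" where
  "is_cycle E xs \<longleftrightarrow> length xs \<ge> 3 \<and> distinct xs
     \<and> (\<forall>i. Suc i < length xs \<longrightarrow> E (xs ! i) (xs ! Suc i)) \<and> E (last xs) (hd xs)"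

definition is_forest :: "'a set \<Rightarrow> ('a \<Rightarrow> 'a \<Rightarrow> bool) \<Rightarrow> bool" where
  "is_forest V E \<longleftrightarrow> is_graph V E \<and> (\<nexists>xs. is_cycle E xs)"

definition partial_coloring :: "nat \<Rightarrow> 'a set \<Rightarrow> ('a \<Rightarrow> 'a \<Rightarrow> bool) \<Rightarrow> ('a \<Rightarrow> nat option) \<Rightarrow> bool" where
  "partial_coloring k V E c \<longleftrightarrow>
     (\<forall>v\<in>V. \<forall>col. c v = Some col \<longrightarrow> col < k) \<and>
     (\<forall>u v. E u v \<longrightarrow> c u \<noteq> None \<longrightarrow> c u \<noteq> c v)"

definition legal :: "nat \<Rightarrow> 'a set \<Rightarrow> ('a \<Rightarrow> 'a \<Rightarrow> bool) \<Rightarrow> ('a \<Rightarrow> nat option) \<Rightarrow> 'a \<Rightarrow> nat \<Rightarrow> bool" where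
  "legal k V E c v col \<longleftrightarrow> v \<in> V \<and> c v = None \<and> col < k \<and>
     (\<forall>u\<in>V. E u v \<longrightarrow> c u \<noteq> Some col)"

text \<open>Bob has won: some uncoloured vertex has no legal colour.\<close>
definition blocked :: "nat \<Rightarrow> 'a set \<Rightarrow> ('a \<Rightarrow> 'a \<Rightarrow> bool) \<Rightarrow> ('a \<Rightarrow> nat option) \<Rightarrow> bool" where
  "blocked k V E c \<longleftrightarrow> (\<exists>v\<in>V. c v = None \<and> (\<forall>col. \<not> legal k V E c v col))"

definition complete :: "'a set \<Rightarrow> ('a \<Rightarrow> nat option) \<Rightarrow> bool" where
  "complete V c \<longleftrightarrow> (\<forall>v\<in>V. c v \<noteq> None)"

text \<open>Winning positions for Alice in the k-Modified Coloring Game: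
  mcg_A: Alice is to move; mcg_B: Bob is to move (Bob may pass).
  Least fixpoint = Alice can force that every vertex becomes coloured
  without Bob ever winning.\<close>
inductive mcg_A and mcg_B for k :: nat and V :: "'a set" and E :: "'a \<Rightarrow> 'a \<Rightarrow> bool" where
  A_done: "complete V c \<Longrightarrow> mcg_A k V E c"
| A_move: "\<not> blocked k V E c \<Longrightarrow> legal k V E c v col \<Longrightarrow> mcg_B k V E (c(v := Some col))
            \<Longrightarrow> mcg_A k V E c"
| B_done: "complete V c \<Longrightarrow> mcg_B k V E c"
| B_move: "\<not> blocked k V E c \<Longrightarrow> mcg_A k V E c
            \<Longrightarrow> (\<And>v col. legal k V E c v col \<Longrightarrow> mcg_A k V E (c(v := Some col)))
            \<Longrightarrow> mcg_B k V E c"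

text \<open>Alice wins the k-MCG on the partially coloured graph (V,E,c) (Bob moves first).\<close>
definition alice_wins :: "nat \<Rightarrow> 'a set \<Rightarrow> ('a \<Rightarrow> 'a \<Rightarrow> bool) \<Rightarrow> ('a \<Rightarrow> nat option) \<Rightarrow> bool" where
  "alice_wins k V E c \<longleftrightarrow> mcg_B k V E c"

text \<open>Connected subgraph on vertex set S (in a forest, connected subgraphs are induced).\<close>
definition connected_on :: "('a \<Rightarrow> 'a \<Rightarrow> bool) \<Rightarrow> 'a set \<Rightarrow> bool" where
  "connected_on E S \<longleftrightarrow> S \<noteq> {} \<and>
     (\<forall>u\<in>S. \<forall>v\<in>S. (\<lambda>x y. x \<in> S \<and> y \<in> S \<and> E x y)\<^sup>*\<^sup>* u v)"

definition trunk_like :: "'a set \<Rightarrow> ('a \<Rightarrow> 'a \<Rightarrow> bool) \<Rightarrow> ('a \<Rightarrow> nat option) \<Rightarrow> 'a set \<Rightarrow> bool" where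
  "trunk_like V E c S \<longleftrightarrow> S \<subseteq> V \<and> connected_on E S \<and>
     (\<forall>v\<in>S. c v \<noteq> None \<longrightarrow> card {u\<in>S. E u v} = 1)"

definition trunk :: "'a set \<Rightarrow> ('a \<Rightarrow> 'a \<Rightarrow> bool) \<Rightarrow> ('a \<Rightarrow> nat option) \<Rightarrow> 'a set \<Rightarrow> bool" where
  "trunk V E c S \<longleftrightarrow> trunk_like V E c S \<and> (\<forall>T. S \<subset> T \<longrightarrow> \<not> trunk_like V E c T)"

text \<open>R(F): disjoint union of all trunks; vertex (S,v) is the copy of v in trunk S.\<close>
definition RV :: "'a set \<Rightarrow> ('a \<Rightarrow> 'a \<Rightarrow> bool) \<Rightarrow> ('a \<Rightarrow> nat option) \<Rightarrow> ('a set \<times> 'a) set" where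
  "RV V E c = {(S, v). trunk V E c S \<and> v \<in> S}"

definition RE :: "('a \<Rightarrow> 'a \<Rightarrow> bool) \<Rightarrow> ('a set \<times> 'a) \<Rightarrow> ('a set \<times> 'a) \<Rightarrow> bool" where
  "RE E x y \<longleftrightarrow> fst x = fst y \<and> snd x \<in> fst x \<and> snd y \<in> fst y \<and> E (snd x) (snd y)"

definition Rc :: "('a \<Rightarrow> nat option) \<Rightarrow> ('a set \<times> 'a) \<Rightarrow> nat option" where
  "Rc c x = c (snd x)"

end

theory Submission
  imports Defs
begin

definition cmp :: "('b set \<times> 'b \<Rightarrow> nat option) \<Rightarrow> 'b set \<Rightarrow> 'b \<Rightarrow> nat option" where
  "cmp D S = (\<lambda>w. D (S, w))"

lemma cmp_upd: "cmp (D((S,v) := x)) T = (if T = S then (cmp D S)(v := x) else cmp D T)"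
  by (auto simp: cmp_def fun_eq_iff)

lemma legal_R:
  "legal k {(S,v). S \<in> I \<and> v \<in> S} (RE E) C (S,v) col \<longleftrightarrow> S \<in> I \<and> legal k S E (cmp C S) v col"
  unfolding legal_def RE_def cmp_def by auto

lemma blocked_R:
  "blocked k {(S,v). S \<in> I \<and> v \<in> S} (RE E) C \<longleftrightarrow> (\<exists>S\<in>I. blocked k S E (cmp C S))"
proof
  assume "blocked k {(S,v). S \<in> I \<and> v \<in> S} (RE E) C"
  then obtain S v where "S \<in> I" "v \<in> S" "C (S,v) = None"
    "\<forall>col. \<not> legal k {(S,v). S \<in> I \<and> v \<in> S} (RE E) C (S,v) col"
    unfolding blocked_def by auto
  then show "\<exists>S\<in>I. blocked k S E (cmp C S)"
    unfolding blocked_def using legal_R[of k I E C S v] by (auto simp: cmp_def)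
next
  assume "\<exists>S\<in>I. blocked k S E (cmp C S)"
  then obtain S v where "S \<in> I" "v \<in> S" "cmp C S v = None"
    "\<forall>col. \<not> legal k S E (cmp C S) v col"
    unfolding blocked_def by auto
  then show "blocked k {(S,v). S \<in> I \<and> v \<in> S} (RE E) C"
    unfolding blocked_def using legal_R[of k I E C S v]
    by (auto simp: cmp_def)
qed

lemma complete_R:
  "complete {(S,v). S \<in> I \<and> v \<in> S} C \<longleftrightarrow> (\<forall>S\<in>I. complete S (cmp C S))"
  unfolding complete_def cmp_def by auto

lemma B_inv: "mcg_B k V E c \<Longrightarrow> \<not> complete V c \<Longrightarrow>
   \<not> blocked k V E c \<and> mcg_A k V E c \<and> (\<forall>v col. legal k V E c v col \<longrightarrow> mcg_A k V E (c(v := Some col)))"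
  by (auto elim: mcg_B.cases)

lemma A_inv: "mcg_A k V E c \<Longrightarrow> \<not> complete V c \<Longrightarrow>
   \<not> blocked k V E c \<and> (\<exists>v col. legal k V E c v col \<and> mcg_B k V E (c(v := Some col)))"
  by (erule mcg_A.cases) blast+

lemma complete_nb: "complete V c \<Longrightarrow> \<not> blocked k V E c"
  unfolding complete_def blocked_def by auto

lemma nb_A: "mcg_A k V E c \<Longrightarrow> \<not> blocked k V E c"
  using A_inv complete_nb by blast

lemma nb_B: "mcg_B k V E c \<Longrightarrow> \<not> blocked k V E c"
  using B_inv complete_nb by blast

lemma card_dec:
  assumes "finite W" "W = {(S,v). S \<in> I \<and> v \<in> S}" "S \<in> I" "legal k S E (cmp D S) v col"
  shows "card {x\<in>W. (D((S,v) := Some col)) x = None} < card {x\<in>W. D x = None}"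
proof -
  have v: "(S,v) \<in> {x\<in>W. D x = None}" using assms(2,3,4) unfolding legal_def cmp_def by auto
  have eq: "{x\<in>W. (D((S,v) := Some col)) x = None} = {x\<in>W. D x = None} - {(S,v)}" by auto
  have f: "finite {x\<in>W. D x = None}" using assms(1) by simp
  show ?thesis unfolding eq by (rule card_Diff1_less[OF f v])
qed

lemma main:
  assumes fin: "finite W" and Wd: "W = {(S,v). S \<in> I \<and> v \<in> S}"
  shows "(\<forall>S\<in>I. mcg_B k S E (cmp C S)) \<Longrightarrow> mcg_B k W (RE E) C"
proof (induction "card {x\<in>W. C x = None}" arbitrary: C rule: less_induct)
  case less
  note IH = less.hyps
  have phaseA: "mcg_A k W (RE E) D"
    if cardD: "card {x\<in>W. D x = None} \<le> card {x\<in>W. C x = None}"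
      and oth: "\<forall>S\<in>I. S \<noteq> S0 \<longrightarrow> mcg_B k S E (cmp D S)"
      and s0': "S0 \<in> I \<Longrightarrow> mcg_A k S0 E (cmp D S0) \<or> mcg_B k S0 E (cmp D S0)"
    for D S0
  proof (cases "complete W D")
    case True
    then show ?thesis by (rule mcg_A_mcg_B.A_done)
  next
    case nc: False
    have nbD: "\<not> blocked k W (RE E) D"
      unfolding Wd blocked_R
    proof
      assume "\<exists>S\<in>I. blocked k S E (cmp D S)"
      then obtain T where "T \<in> I" "blocked k T E (cmp D T)" by blast
      then show False
      proof (cases "T = S0")
        case True
        then have "mcg_A k T E (cmp D T) \<or> mcg_B k T E (cmp D T)" using s0' \<open>T \<in> I\<close> by simp
        then show False using nb_A nb_B \<open>blocked k T E (cmp D T)\<close> by blast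
      next
        case False
        then have "mcg_B k T E (cmp D T)" using oth \<open>T \<in> I\<close> by simp
        then show False using nb_B \<open>blocked k T E (cmp D T)\<close> by blast
      qed
    qed
    show ?thesis
    proof (cases "S0 \<in> I \<and> \<not> complete S0 (cmp D S0) \<and> mcg_A k S0 E (cmp D S0)")
      case True
      then obtain v col where lg: "legal k S0 E (cmp D S0) v col"
        and mb: "mcg_B k S0 E ((cmp D S0)(v := Some col))"
        using A_inv by blast
      let ?D = "D((S0,v) := Some col)"
      have "mcg_B k W (RE E) ?D"
      proof (rule IH)
        show "card {x\<in>W. ?D x = None} < card {x\<in>W. C x = None}"
          using less_le_trans[OF card_dec[OF fin Wd _ lg] cardD] True by blast
        show "\<forall>S\<in>I. mcg_B k S E (cmp ?D S)"
          using oth mb by (auto simp: cmp_upd)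
      qed
      moreover have "legal k W (RE E) D (S0,v) col"
        using lg True unfolding Wd legal_R by simp
      ultimately show ?thesis using nbD by (blast intro: mcg_A_mcg_B.A_move)
    next
      case nA: False
      have allB: "\<forall>S\<in>I. mcg_B k S E (cmp D S)"
      proof
        fix S assume S: "S \<in> I"
        show "mcg_B k S E (cmp D S)"
        proof (cases "S = S0")
          case True
          show ?thesis
          proof (cases "complete S0 (cmp D S0)")
            case True then show ?thesis using \<open>S = S0\<close> by (simp add: mcg_A_mcg_B.B_done)
          next
            case False
            then have "\<not> mcg_A k S0 E (cmp D S0)" using nA \<open>S = S0\<close> S by blast
            then show ?thesis using \<open>S = S0\<close> S s0' by blast
          qed
        next
          case False then show ?thesis using oth S by blast
        qed
      qed
      from nc obtain T where T: "T \<in> I" "\<not> complete T (cmp D T)"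
        unfolding Wd complete_R by blast
      then have "mcg_A k T E (cmp D T)" using allB B_inv by blast
      then obtain v col where lg: "legal k T E (cmp D T) v col"
        and mb: "mcg_B k T E ((cmp D T)(v := Some col))"
        using A_inv T by blast
      let ?D = "D((T,v) := Some col)"
      have "mcg_B k W (RE E) ?D"
      proof (rule IH)
        show "card {x\<in>W. ?D x = None} < card {x\<in>W. C x = None}"
          using less_le_trans[OF card_dec[OF fin Wd _ lg] cardD] T by blast
        show "\<forall>S\<in>I. mcg_B k S E (cmp ?D S)"
          using allB mb by (auto simp: cmp_upd)
      qed
      moreover have "legal k W (RE E) D (T,v) col"
        using lg T unfolding Wd legal_R by simp
      ultimately show ?thesis using nbD by (blast intro: mcg_A_mcg_B.A_move)
    qed
  qed
  show ?case
  proof (cases "complete W C")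
    case True
    then show ?thesis by (rule mcg_A_mcg_B.B_done)
  next
    case nc: False
    have nbC: "\<not> blocked k W (RE E) C"
      unfolding Wd blocked_R using less.prems nb_B by blast
    have passA: "mcg_A k W (RE E) C"
      by (rule phaseA[of C undefined]) (use less.prems in auto)
    have bob: "mcg_A k W (RE E) (C(x := Some col))" if lg: "legal k W (RE E) C x col" for x col
    proof -
      obtain S v where x: "x = (S,v)" by (cases x)
      have lgS: "S \<in> I" "legal k S E (cmp C S) v col"
        using lg unfolding x Wd legal_R by auto
      have "\<not> complete S (cmp C S)"
        using lgS(2) unfolding legal_def complete_def by auto
      then have "mcg_A k S E ((cmp C S)(v := Some col))"
        using B_inv less.prems lgS by blast
      show ?thesis unfolding x
      proof (rule phaseA[of _ S])
        show "card {y\<in>W. (C((S,v) := Some col)) y = None} \<le> card {x\<in>W. C x = None}"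
          using card_dec[OF fin Wd lgS] by linarith
        show "\<forall>T\<in>I. T \<noteq> S \<longrightarrow> mcg_B k T E (cmp (C((S,v) := Some col)) T)"
          using less.prems by (auto simp: cmp_upd)
        show "mcg_A k S E (cmp (C((S,v) := Some col)) S) \<or> mcg_B k S E (cmp (C((S,v) := Some col)) S)"
          using \<open>mcg_A k S E _\<close> by (simp add: cmp_upd)
      qed
    qed
    show ?thesis using nbC passA bob by (blast intro: mcg_A_mcg_B.B_move)
  qed
qed

theorem lemma2p2:
  fixes k :: nat and V :: "'a set" and E :: "'a \<Rightarrow> 'a \<Rightarrow> bool" and c :: "'a \<Rightarrow> nat option"
  assumes "k \<ge> 1"
    and "is_forest V E"
    and "partial_coloring k V E c"
    and "\<And>S. trunk V E c S \<Longrightarrow> alice_wins k S E c"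
  shows "alice_wins k (RV V E c) (RE E) (Rc c)"
proof -
  let ?I = "Collect (trunk V E c)"
  have fV: "finite V" using assms(2) unfolding is_forest_def is_graph_def by auto
  have sub: "RV V E c \<subseteq> Pow V \<times> V"
    unfolding RV_def trunk_def trunk_like_def by auto
  have fin: "finite (RV V E c)" using finite_subset[OF sub] fV by auto
  have Wd: "RV V E c = {(S,v). S \<in> ?I \<and> v \<in> S}" unfolding RV_def by auto
  have "mcg_B k (RV V E c) (RE E) (Rc c)"
    by (rule main[OF fin Wd]) (use assms(4) in \<open>auto simp: cmp_def Rc_def alice_wins_def\<close>)
  then show ?thesis unfolding alice_wins_def .
qed

end
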